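(* Let $i<s<j<t$ be indices in $[1,m+n]$. Then in $U_q$ the following identities hold: $$[E_{ij},F_{st}]=(q_j^{-1}-q_j)\,K_sK_j^{-1}\,F_{jt}E_{is},\qquad [E_{st},F_{ij}]=(q_j-q_j^{-1})\,F_{is}E_{jt}\,K_s^{-1}K_j .$$
   Context: Let $m,n\ge 1$, let $q$ be an indeterminate, and let indices range over $[1,m+n]=\{1,\dots,m+n\}$. Put $q_i=q$ if $i\le m$ and $q_i=q^{-1}$ if $i>m$. Let $\mathcal I_0=\{(i,j):1\le i<j\le m \text{ or } m+1\le i<j\le m+n\}$, $\mathcal I_1=\{(i,j):1\le i\le m<j\le m+n\}$. The quantum supergroup $U_q=U_q(\mathfrak{gl}(m|n))$ is the associative $\mathbb C(q)$-superalgebra generated by $K_j^{\pm1}$ ($j\in[1,m+n]$) and $E_{i,i+1},F_{i,i+1}$ ($1\le i<m+n$), where $K_j^{\pm1}$ and $E_{i,i+1},F_{i,i+1}$ for $i\ne m$ are even and $E_{m,m+1},F_{m,m+1}$ are odd, subject to: $K_iK_j=K_jK_i$, $K_iK_i^{-1}=1$; $K_iE_{j,j+1}K_i^{-1}=q_i^{\delta_{ij}-\delta_{i,j+1}}E_{j,j+1}$, $K_iF_{j,j+1}K_i^{-1}=q_i^{-(\delta_{ij}-\delta_{i,j+1})}F_{j,j+1}$; $[E_{i,i+1},F_{j,j+1}]=\delta_{ij}\frac{K_iK_{i+1}^{-1}-K_i^{-1}K_{i+1}}{q_i-q_i^{-1}}$; $E_{m,m+1}^2=F_{m,m+1}^2=0$;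 $E_{i,i+1}E_{j,j+1}=E_{j,j+1}E_{i,i+1}$ and $F_{i,i+1}F_{j,j+1}=F_{j,j+1}F_{i,i+1}$ for $|i-j|>1$; for $|i-j|=1$, $i\neq m$, and $X\in\{E,F\}$: $X_{i,i+1}^2X_{j,j+1}-(q+q^{-1})X_{i,i+1}X_{j,j+1}X_{i,i+1}+X_{j,j+1}X_{i,i+1}^2=0$; and $[E_{m-1,m+2},E_{m,m+1}]=[F_{m-1,m+2},F_{m,m+1}]=0$. Here for homogeneous $x,y$, $[x,y]=xy-(-1)^{\bar x\bar y}yx$ (super commutator, $\bar x$ the parity). For $i<j$ with $j>i+1$, elements $E_{ij},F_{ij}$ are defined recursively by $E_{ij}=E_{ic}E_{cj}-q_c^{-1}E_{cj}E_{ic}$ and $F_{ij}=-q_cF_{ic}F_{cj}+F_{cj}F_{ic}$ for $i<c<j$ (independent of the choice of $c$); $E_{ij},F_{ij}$ are odd if $(i,j)\in\mathcal I_1$ and even otherwise. *)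

theory Defs
  imports Complex_Main "HOL-Computational_Algebra.Polynomial" "HOL-Computational_Algebra.Fraction_Field"
begin

type_synonym cq = "complex poly fract"

definition qq :: cq where "qq = Fract [:0, 1:] 1"

definition qi :: "nat \<Rightarrow> nat \<Rightarrow> cq" where
  "qi m i = (if i \<le> m then qq else inverse qq)"

text \<open>Parity of E_ij / F_ij (i<j): odd iff (i,j) in I_1.\<close>
definition oddpair :: "nat \<Rightarrow> nat \<Rightarrow> nat \<Rightarrow> bool" where
  "oddpair m i j \<longleftrightarrow> i \<le> m \<and> m < j"

text \<open>Super commutator of homogeneous elements with given parities.\<close>
definition sbr :: "bool \<Rightarrow> bool \<Rightarrow> 'a::ring_1 \<Rightarrow> 'a \<Rightarrow> 'a" where
  "sbr px py x y = x * y - (if px \<and> py then -1 else 1) * (y * x)"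

text \<open>Generator e i stands for E_{i,i+1}, f i for F_{i,i+1}.
  Eg k i = E_{i,i+k+1}, defined recursively with c = i+1.\<close>
primrec Eg :: "nat \<Rightarrow> (cq \<Rightarrow> 'a::ring_1) \<Rightarrow> (nat \<Rightarrow> 'a) \<Rightarrow> nat \<Rightarrow> nat \<Rightarrow> 'a" where
  "Eg m emb e 0 i = e i"
| "Eg m emb e (Suc k) i =
     e i * Eg m emb e k (Suc i) - emb (inverse (qi m (Suc i))) * Eg m emb e k (Suc i) * e i"

primrec Fg :: "nat \<Rightarrow> (cq \<Rightarrow> 'a::ring_1) \<Rightarrow> (nat \<Rightarrow> 'a) \<Rightarrow> nat \<Rightarrow> nat \<Rightarrow> 'a" where
  "Fg m emb f 0 i = f i"
| "Fg m emb f (Suc k) i =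
     - emb (qi m (Suc i)) * f i * Fg m emb f k (Suc i) + Fg m emb f k (Suc i) * f i"

definition Eel :: "nat \<Rightarrow> (cq \<Rightarrow> 'a::ring_1) \<Rightarrow> (nat \<Rightarrow> 'a) \<Rightarrow> nat \<Rightarrow> nat \<Rightarrow> 'a" where
  "Eel m emb e i j = Eg m emb e (j - i - 1) i"

definition Fel :: "nat \<Rightarrow> (cq \<Rightarrow> 'a::ring_1) \<Rightarrow> (nat \<Rightarrow> 'a) \<Rightarrow> nat \<Rightarrow> nat \<Rightarrow> 'a" where
  "Fel m emb f i j = Fg m emb f (j - i - 1) i"

definition delta :: "nat \<Rightarrow> nat \<Rightarrow> int" where
  "delta i j = (if i = j then 1 else 0)"

text \<open>uq_alg m n emb K Ki e f: the ring 'a is a C(q)-algebra via the central ring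
  homomorphism emb, and the elements K j, Ki j (= K_j^{-1}), e i (= E_{i,i+1}),
  f i (= F_{i,i+1}) satisfy the defining relations of U_q(gl(m|n)).\<close>
definition uq_alg :: "nat \<Rightarrow> nat \<Rightarrow> (cq \<Rightarrow> 'a::ring_1) \<Rightarrow> (nat \<Rightarrow> 'a) \<Rightarrow> (nat \<Rightarrow> 'a)
    \<Rightarrow> (nat \<Rightarrow> 'a) \<Rightarrow> (nat \<Rightarrow> 'a) \<Rightarrow> bool" where
  "uq_alg m n emb K Ki e f \<longleftrightarrow>
    emb 1 = 1 \<and> (\<forall>a b. emb (a + b) = emb a + emb b) \<and> (\<forall>a b. emb (a * b) = emb a * emb b)
    \<and> (\<forall>a x. emb a * x = x * emb a)
    \<and> (\<forall>i\<in>{1..m+n}. \<forall>j\<in>{1..m+n}. K i * K j = K j * K i)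
    \<and> (\<forall>i\<in>{1..m+n}. K i * Ki i = 1 \<and> Ki i * K i = 1)
    \<and> (\<forall>i\<in>{1..m+n}. \<forall>j\<in>{1..<m+n}.
         K i * e j * Ki i = emb (qi m i powi (delta i j - delta i (j+1))) * e j
       \<and> K i * f j * Ki i = emb (qi m i powi (- (delta i j - delta i (j+1)))) * f j)
    \<and> (\<forall>i\<in>{1..<m+n}. \<forall>j\<in>{1..<m+n}.
         sbr (i = m) (j = m) (e i) (f j) =
           (if i = j then emb (inverse (qi m i - inverse (qi m i))) * (K i * Ki (i+1) - Ki i * K (i+1))
            else 0))
    \<and> e m * e m = 0 \<and> f m * f m = 0
    \<and> (\<forall>i\<in>{1..<m+n}. \<forall>j\<in>{1..<m+n}. (i + 1 < j \<or> j + 1 < i) \<longrightarrow>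
         e i * e j = e j * e i \<and> f i * f j = f j * f i)
    \<and> (\<forall>i\<in>{1..<m+n}. \<forall>j\<in>{1..<m+n}. (i + 1 = j \<or> j + 1 = i) \<and> i \<noteq> m \<longrightarrow>
         e i * e i * e j - emb (qq + inverse qq) * e i * e j * e i + e j * e i * e i = 0
       \<and> f i * f i * f j - emb (qq + inverse qq) * f i * f j * f i + f j * f i * f i = 0)
    \<and> (2 \<le> m \<and> 2 \<le> n \<longrightarrow>
         sbr True True (Eel m emb e (m - 1) (m + 2)) (e m) = 0
       \<and> sbr True True (Fel m emb f (m - 1) (m + 2)) (f m) = 0)"

end

theory Submission
  imports Defs
begin

lemma qq_nz: "qq \<noteq> 0"
  by (simp add: qq_def Zero_fract_def eq_fract)
lemma qq_sq: "qq * qq \<noteq> 1"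
proof -
  have "[:0,0,1::complex:] \<noteq> 1"
  proof
    assume "[:0,0,1::complex:] = 1"
    hence "coeff [:0,0,1::complex:] 2 = coeff 1 2" by simp
    thus False by (simp add: numeral_2_eq_2)
  qed
  thus ?thesis unfolding qq_def by (simp add: One_fract_def eq_fract)
qed



lemma qq_inv_nz: "qq - inverse qq \<noteq> 0"
proof
  assume "qq - inverse qq = 0"
  hence "qq * (qq - inverse qq) = 0" by simp
  hence "qq * qq = 1" using qq_nz by (simp add: algebra_simps)
  thus False using qq_sq by simp
qed

lemma qi_nz: "qi m a \<noteq> 0" using qq_nz by (simp add: qi_def)

locale UQ =
  fixes m n :: nat and emb :: "cq \<Rightarrow> 'a::ring_1" and K Ki e f :: "nat \<Rightarrow> 'a"
  assumes uq: "uq_alg m n emb K Ki e f"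
begin

definition smul :: "cq \<Rightarrow> 'a \<Rightarrow> 'a" where "smul c x = emb c * x"

abbreviation E where "E \<equiv> Eel m emb e"
abbreviation F where "F \<equiv> Fel m emb f"

lemma emb1: "emb 1 = 1" using uq unfolding uq_alg_def by (elim conjE) blast
lemma emb_add: "emb (a + b) = emb a + emb b" using uq unfolding uq_alg_def by (elim conjE) blast
lemma emb_mult: "emb (a * b) = emb a * emb b" using uq unfolding uq_alg_def by (elim conjE) blast
lemma central: "emb a * x = x * emb a" using uq unfolding uq_alg_def by (elim conjE) blast
lemma emb0: "emb 0 = 0" using emb_add[of 0 0] by simp
lemma emb_minus: "emb (- a) = - emb a" using emb_add[of a "-a"] emb0 by (simp add: add_eq_0_iff2)
lemma emb_diff: "emb (a - b) = emb a - emb b" using emb_add[of a "-b"] emb_minus by simp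

lemma emb_smul: "emb c = smul c 1" by (simp add: smul_def)
lemma smul_mult_left[simp]: "smul c x * y = smul c (x * y)" by (simp add: smul_def mult.assoc)
lemma mult_smul[simp]: "x * smul c y = smul c (x * y)"
proof -
  have "x * (emb c * y) = (x * emb c) * y" by (simp add: mult.assoc)
  also have "\<dots> = (emb c * x) * y" by (simp only: central[of c x])
  also have "\<dots> = emb c * (x * y)" by (simp only: mult.assoc)
  finally show ?thesis by (simp add: smul_def)
qed
lemma smul_smul[simp]: "smul c (smul d x) = smul (c * d) x" by (simp add: smul_def emb_mult mult.assoc)
lemma smul_add: "smul c (x + y) = smul c x + smul c y" by (simp add: smul_def distrib_left)
lemma smul_diff: "smul c (x - y) = smul c x - smul c y" by (simp add: smul_def algebra_simps)
lemma smul_minus: "smul c (- x) = - smul c x" by (simp add: smul_def)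
lemma smul_one[simp]: "smul 1 x = x" by (simp add: smul_def emb1)
lemma smul_zero[simp]: "smul c 0 = 0" by (simp add: smul_def)
lemma smul_zero2[simp]: "smul 0 x = 0" by (simp add: smul_def emb0)
lemma smul_add2: "smul (c + d) x = smul c x + smul d x" by (simp add: smul_def emb_add algebra_simps)
lemma smul_diff2: "smul (c - d) x = smul c x - smul d x" by (simp add: smul_def emb_diff algebra_simps)
lemma smul_neg2: "smul (- c) x = - smul c x" by (simp add: smul_def emb_minus)

lemmas smul_lin = smul_add smul_diff smul_minus smul_add2 smul_diff2 smul_neg2

lemma KK: "i \<in> {1..m+n} \<Longrightarrow> j \<in> {1..m+n} \<Longrightarrow> K i * K j = K j * K i"
  using uq unfolding uq_alg_def by (elim conjE) blast
lemma KKi: "i \<in> {1..m+n} \<Longrightarrow> K i * Ki i = 1" using uq unfolding uq_alg_def by (elim conjE) blast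
lemma KiK: "i \<in> {1..m+n} \<Longrightarrow> Ki i * K i = 1" using uq unfolding uq_alg_def by (elim conjE) blast
lemma Ke: "i \<in> {1..m+n} \<Longrightarrow> j \<in> {1..<m+n} \<Longrightarrow>
   K i * e j * Ki i = emb (qi m i powi (delta i j - delta i (j+1))) * e j"
  using uq unfolding uq_alg_def by (elim conjE) blast
lemma Kf: "i \<in> {1..m+n} \<Longrightarrow> j \<in> {1..<m+n} \<Longrightarrow>
   K i * f j * Ki i = emb (qi m i powi (- (delta i j - delta i (j+1)))) * f j"
  using uq unfolding uq_alg_def by (elim conjE) blast
lemma ef: "i \<in> {1..<m+n} \<Longrightarrow> j \<in> {1..<m+n} \<Longrightarrow> sbr (i = m) (j = m) (e i) (f j) =
           (if i = j then emb (inverse (qi m i - inverse (qi m i))) * (K i * Ki (i+1) - Ki i * K (i+1))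
            else 0)"
  using uq unfolding uq_alg_def by (elim conjE) blast
lemma far: "i \<in> {1..<m+n} \<Longrightarrow> j \<in> {1..<m+n} \<Longrightarrow> (i + 1 < j \<or> j + 1 < i) \<Longrightarrow>
         e i * e j = e j * e i \<and> f i * f j = f j * f i"
  using uq unfolding uq_alg_def by (elim conjE) blast

lemma ef_comm: "i \<in> {1..<m+n} \<Longrightarrow> j \<in> {1..<m+n} \<Longrightarrow> i \<noteq> j \<Longrightarrow> e i * f j = f j * e i"
  using ef[of i j] by (auto simp add: sbr_def split: if_splits)

lemma comm_Ki: "i \<in> {1..m+n} \<Longrightarrow> x * K i = K i * x \<Longrightarrow> Ki i * x = x * Ki i"
proof -
  assume a: "i \<in> {1..m+n}" "x * K i = K i * x"
  have "Ki i * x = Ki i * x * (K i * Ki i)" using a by (simp add: KKi)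
  also have "\<dots> = Ki i * (x * K i) * Ki i" by (simp only: mult.assoc)
  also have "\<dots> = Ki i * K i * (x * Ki i)" using a by (simp add: mult.assoc)
  also have "\<dots> = x * Ki i" using a by (simp add: KiK)
  finally show ?thesis .
qed

lemma KiK': "i \<in> {1..m+n} \<Longrightarrow> j \<in> {1..m+n} \<Longrightarrow> Ki i * K j = K j * Ki i"
  by (rule comm_Ki) (auto intro: KK)
lemma KiKi: "i \<in> {1..m+n} \<Longrightarrow> j \<in> {1..m+n} \<Longrightarrow> Ki i * Ki j = Ki j * Ki i"
  by (rule comm_Ki) (auto intro: KiK')

lemma E_base: "E a (Suc a) = e a" by (simp add: Eel_def)
lemma F_base: "F a (Suc a) = f a" by (simp add: Fel_def)
lemma E_rec: "Suc a < b \<Longrightarrow> E a b = e a * E (Suc a) b - smul (inverse (qi m (Suc a))) (E (Suc a) b * e a)"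
proof -
  assume "Suc a < b"
  hence "b - a - 1 = Suc (b - Suc a - 1)" by simp
  thus ?thesis by (simp add: Eel_def smul_def mult.assoc)
qed
lemma F_rec: "Suc a < b \<Longrightarrow> F a b = - smul (qi m (Suc a)) (f a * F (Suc a) b) + F (Suc a) b * f a"
proof -
  assume "Suc a < b"
  hence "b - a - 1 = Suc (b - Suc a - 1)" by simp
  thus ?thesis by (simp add: Fel_def smul_def mult.assoc)
qed

definition wt :: "nat \<Rightarrow> 'a \<Rightarrow> cq \<Rightarrow> bool" where "wt a X w \<longleftrightarrow> K a * X = smul w (X * K a)"
definition wti :: "nat \<Rightarrow> 'a \<Rightarrow> cq \<Rightarrow> bool" where "wti a X w \<longleftrightarrow> Ki a * X = smul w (X * Ki a)"
definition cm :: "'a \<Rightarrow> 'a \<Rightarrow> bool" where "cm X Y \<longleftrightarrow> X * Y = Y * X"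

lemma wt_mult: "wt a X v \<Longrightarrow> wt a Y w \<Longrightarrow> wt a (X * Y) (v * w)"
  unfolding wt_def
proof -
  assume 1: "K a * X = smul v (X * K a)" and 2: "K a * Y = smul w (Y * K a)"
  have "K a * (X * Y) = (K a * X) * Y" by (simp add: mult.assoc)
  also have "\<dots> = smul v (X * (K a * Y))" by (simp add: 1 mult.assoc)
  also have "\<dots> = smul (v * w) (X * Y * K a)" by (simp add: 2 mult.assoc)
  finally show "K a * (X * Y) = smul (v * w) (X * Y * K a)" .
qed
lemma wti_mult: "wti a X v \<Longrightarrow> wti a Y w \<Longrightarrow> wti a (X * Y) (v * w)"
  unfolding wti_def
proof -
  assume 1: "Ki a * X = smul v (X * Ki a)" and 2: "Ki a * Y = smul w (Y * Ki a)"
  have "Ki a * (X * Y) = (Ki a * X) * Y" by (simp add: mult.assoc)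
  also have "\<dots> = smul v (X * (Ki a * Y))" by (simp add: 1 mult.assoc)
  also have "\<dots> = smul (v * w) (X * Y * Ki a)" by (simp add: 2 mult.assoc)
  finally show "Ki a * (X * Y) = smul (v * w) (X * Y * Ki a)" .
qed
lemma wt_diff: "wt a X w \<Longrightarrow> wt a Y w \<Longrightarrow> wt a (X - Y) w"
  unfolding wt_def by (simp add: algebra_simps smul_diff)
lemma wt_add: "wt a X w \<Longrightarrow> wt a Y w \<Longrightarrow> wt a (X + Y) w"
  unfolding wt_def by (simp add: algebra_simps smul_add)
lemma wt_neg: "wt a X w \<Longrightarrow> wt a (- X) w"
  unfolding wt_def by (simp add: smul_minus)
lemma wt_smul: "wt a X w \<Longrightarrow> wt a (smul c X) w"
  unfolding wt_def by (simp add: mult.commute)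
lemma wti_diff: "wti a X w \<Longrightarrow> wti a Y w \<Longrightarrow> wti a (X - Y) w"
  unfolding wti_def by (simp add: algebra_simps smul_diff)
lemma wti_add: "wti a X w \<Longrightarrow> wti a Y w \<Longrightarrow> wti a (X + Y) w"
  unfolding wti_def by (simp add: algebra_simps smul_add)
lemma wti_neg: "wti a X w \<Longrightarrow> wti a (- X) w"
  unfolding wti_def by (simp add: smul_minus)
lemma wti_smul: "wti a X w \<Longrightarrow> wti a (smul c X) w"
  unfolding wti_def by (simp add: mult.commute)

lemma cm_mult: "cm Z X \<Longrightarrow> cm Z Y \<Longrightarrow> cm Z (X * Y)"
  unfolding cm_def by (metis mult.assoc)
lemma cm_diff: "cm Z X \<Longrightarrow> cm Z Y \<Longrightarrow> cm Z (X - Y)"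
  unfolding cm_def by (simp add: algebra_simps)
lemma cm_add: "cm Z X \<Longrightarrow> cm Z Y \<Longrightarrow> cm Z (X + Y)"
  unfolding cm_def by (simp add: algebra_simps)
lemma cm_neg: "cm Z X \<Longrightarrow> cm Z (- X)"
  unfolding cm_def by simp
lemma cm_smul: "cm Z X \<Longrightarrow> cm Z (smul c X)"
  unfolding cm_def by simp

lemma smul_inv_cancel: "c \<noteq> 0 \<Longrightarrow> smul (inverse c) (smul c X) = X"
  by simp

lemma wt_wti: "a \<in> {1..m+n} \<Longrightarrow> w \<noteq> 0 \<Longrightarrow> wt a X w \<Longrightarrow> wti a X (inverse w)"
  unfolding wt_def wti_def
proof -
  assume a: "a \<in> {1..m+n}" "w \<noteq> 0" and h: "K a * X = smul w (X * K a)"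
  have xk: "X * K a = smul (inverse w) (K a * X)" using h a by simp
  have "Ki a * X = Ki a * X * (K a * Ki a)" using a by (simp add: KKi)
  also have "\<dots> = Ki a * (X * K a) * Ki a" by (simp only: mult.assoc)
  also have "\<dots> = smul (inverse w) (Ki a * K a * (X * Ki a))" by (simp add: xk mult.assoc)
  also have "\<dots> = smul (inverse w) (X * Ki a)" using a by (simp add: KiK)
  finally show "Ki a * X = smul (inverse w) (X * Ki a)" .
qed

lemma wt_e: "a \<in> {1..m+n} \<Longrightarrow> b \<in> {1..<m+n} \<Longrightarrow> wt a (e b) (qi m a powi (delta a b - delta a (b+1)))"
  unfolding wt_def
proof -
  assume a: "a \<in> {1..m+n}" "b \<in> {1..<m+n}"
  have "K a * e b = (K a * e b * Ki a) * K a" by (simp add: mult.assoc KiK[OF a(1)])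
  also have "\<dots> = emb (qi m a powi (delta a b - delta a (b+1))) * e b * K a" by (simp only: Ke[OF a])
  finally show "K a * e b = smul (qi m a powi (delta a b - delta a (b+1))) (e b * K a)"
    by (simp add: smul_def mult.assoc)
qed
lemma wt_f: "a \<in> {1..m+n} \<Longrightarrow> b \<in> {1..<m+n} \<Longrightarrow> wt a (f b) (qi m a powi (- (delta a b - delta a (b+1))))"
  unfolding wt_def
proof -
  assume a: "a \<in> {1..m+n}" "b \<in> {1..<m+n}"
  have "K a * f b = (K a * f b * Ki a) * K a" by (simp add: mult.assoc KiK[OF a(1)])
  also have "\<dots> = emb (qi m a powi (- (delta a b - delta a (b+1)))) * f b * K a" by (simp only: Kf[OF a])
  finally show "K a * f b = smul (qi m a powi (- (delta a b - delta a (b+1)))) (f b * K a)"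
    by (simp add: smul_def mult.assoc)
qed

lemma wt_E_aux: "a \<in> {1..m+n} \<Longrightarrow> 1 \<le> b \<Longrightarrow> b + k + 1 \<le> m + n \<Longrightarrow>
   wt a (E b (b+k+1)) (qi m a powi (delta a b - delta a (b+k+1)))"
proof (induction k arbitrary: b)
  case 0
  then show ?case using wt_e[of a b] by (simp add: E_base)
next
  case (Suc k)
  have r: "E b (b + Suc k + 1) = e b * E (Suc b) (Suc b + k + 1) - smul (inverse (qi m (Suc b))) (E (Suc b) (Suc b + k + 1) * e b)"
    using E_rec[of b "b + Suc k + 1"] by simp
  have w1: "wt a (e b) (qi m a powi (delta a b - delta a (Suc b)))" using wt_e[of a b] Suc.prems by simp
  have w2: "wt a (E (Suc b) (Suc b + k + 1)) (qi m a powi (delta a (Suc b) - delta a (Suc b + k + 1)))"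
    using Suc.IH[of "Suc b"] Suc.prems by simp
  have eq: "qi m a powi (delta a b - delta a (Suc b)) * qi m a powi (delta a (Suc b) - delta a (Suc b + k + 1))
      = qi m a powi (delta a b - delta a (b + Suc k + 1))"
    by (simp add: power_int_add[symmetric] qi_nz)
  have eq2: "qi m a powi (delta a (Suc b) - delta a (Suc b + k + 1)) * qi m a powi (delta a b - delta a (Suc b))
      = qi m a powi (delta a b - delta a (b + Suc k + 1))"
    using eq by (simp only: mult.commute)
  have p1: "wt a (e b * E (Suc b) (Suc b + k + 1)) (qi m a powi (delta a b - delta a (b + Suc k + 1)))"
    using wt_mult[OF w1 w2] unfolding eq .
  have p2: "wt a (E (Suc b) (Suc b + k + 1) * e b) (qi m a powi (delta a b - delta a (b + Suc k + 1)))"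
    using wt_mult[OF w2 w1] unfolding eq2 .
  show ?case unfolding r by (intro wt_diff wt_smul p1 p2)
qed

lemma wt_F_aux: "a \<in> {1..m+n} \<Longrightarrow> 1 \<le> b \<Longrightarrow> b + k + 1 \<le> m + n \<Longrightarrow>
   wt a (F b (b+k+1)) (qi m a powi (- (delta a b - delta a (b+k+1))))"
proof (induction k arbitrary: b)
  case 0
  then show ?case using wt_f[of a b] by (simp add: F_base)
next
  case (Suc k)
  have r: "F b (b + Suc k + 1) = - smul (qi m (Suc b)) (f b * F (Suc b) (Suc b + k + 1)) + F (Suc b) (Suc b + k + 1) * f b"
    using F_rec[of b "b + Suc k + 1"] by simp
  have w1: "wt a (f b) (qi m a powi (- (delta a b - delta a (Suc b))))" using wt_f[of a b] Suc.prems by simp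
  have w2: "wt a (F (Suc b) (Suc b + k + 1)) (qi m a powi (- (delta a (Suc b) - delta a (Suc b + k + 1))))"
    using Suc.IH[of "Suc b"] Suc.prems by simp
  have eq: "qi m a powi (- (delta a b - delta a (Suc b))) * qi m a powi (- (delta a (Suc b) - delta a (Suc b + k + 1)))
      = qi m a powi (- (delta a b - delta a (b + Suc k + 1)))"
    by (simp add: power_int_add[symmetric] qi_nz)
  have eq2: "qi m a powi (- (delta a (Suc b) - delta a (Suc b + k + 1))) * qi m a powi (- (delta a b - delta a (Suc b)))
      = qi m a powi (- (delta a b - delta a (b + Suc k + 1)))"
    using eq by (simp only: mult.commute)
  have p1: "wt a (f b * F (Suc b) (Suc b + k + 1)) (qi m a powi (- (delta a b - delta a (b + Suc k + 1))))"
    using wt_mult[OF w1 w2] unfolding eq .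
  have p2: "wt a (F (Suc b) (Suc b + k + 1) * f b) (qi m a powi (- (delta a b - delta a (b + Suc k + 1))))"
    using wt_mult[OF w2 w1] unfolding eq2 .
  show ?case unfolding r by (intro wt_add wt_neg wt_smul p1 p2)
qed

lemma wt_E: "a \<in> {1..m+n} \<Longrightarrow> 1 \<le> b \<Longrightarrow> b < c \<Longrightarrow> c \<le> m + n \<Longrightarrow>
   wt a (E b c) (qi m a powi (delta a b - delta a c))"
  using wt_E_aux[of a b "c - b - 1"] by simp
lemma wt_F: "a \<in> {1..m+n} \<Longrightarrow> 1 \<le> b \<Longrightarrow> b < c \<Longrightarrow> c \<le> m + n \<Longrightarrow>
   wt a (F b c) (qi m a powi (- (delta a b - delta a c)))"
  using wt_F_aux[of a b "c - b - 1"] by simp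
lemma wti_E: "a \<in> {1..m+n} \<Longrightarrow> 1 \<le> b \<Longrightarrow> b < c \<Longrightarrow> c \<le> m + n \<Longrightarrow>
   wti a (E b c) (qi m a powi (- (delta a b - delta a c)))"
  using wt_wti[OF _ _ wt_E[of a b c]] power_int_minus[of "qi m a" "delta a b - delta a c"] by (simp add: qi_nz)
lemma wti_F: "a \<in> {1..m+n} \<Longrightarrow> 1 \<le> b \<Longrightarrow> b < c \<Longrightarrow> c \<le> m + n \<Longrightarrow>
   wti a (F b c) (qi m a powi (delta a b - delta a c))"
  using wt_wti[OF _ _ wt_F[of a b c]] power_int_minus[of "qi m a" "- (delta a b - delta a c)"] by (simp add: qi_nz)


lemma cm_E_aux: "(\<forall>k. b \<le> k \<and> k \<le> b + k' \<longrightarrow> cm Z (e k)) \<Longrightarrow> cm Z (E b (b+k'+1))"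
proof (induction k' arbitrary: b)
  case 0
  then show ?case by (simp add: E_base)
next
  case (Suc k)
  have r: "E b (b + Suc k + 1) = e b * E (Suc b) (Suc b + k + 1) - smul (inverse (qi m (Suc b))) (E (Suc b) (Suc b + k + 1) * e b)"
    using E_rec[of b "b + Suc k + 1"] by simp
  have 1: "cm Z (e b)" using Suc.prems by simp
  have 2: "cm Z (E (Suc b) (Suc b + k + 1))" using Suc.prems by (intro Suc.IH) auto
  show ?case unfolding r by (intro cm_diff cm_smul cm_mult 1 2)
qed
lemma cm_F_aux: "(\<forall>k. b \<le> k \<and> k \<le> b + k' \<longrightarrow> cm Z (f k)) \<Longrightarrow> cm Z (F b (b+k'+1))"
proof (induction k' arbitrary: b)
  case 0
  then show ?case by (simp add: F_base)
next
  case (Suc k)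
  have r: "F b (b + Suc k + 1) = - smul (qi m (Suc b)) (f b * F (Suc b) (Suc b + k + 1)) + F (Suc b) (Suc b + k + 1) * f b"
    using F_rec[of b "b + Suc k + 1"] by simp
  have 1: "cm Z (f b)" using Suc.prems by simp
  have 2: "cm Z (F (Suc b) (Suc b + k + 1))" using Suc.prems by (intro Suc.IH) auto
  show ?case unfolding r by (intro cm_add cm_neg cm_smul cm_mult 1 2)
qed
lemma cm_E: "b < c \<Longrightarrow> (\<And>k. b \<le> k \<Longrightarrow> k < c \<Longrightarrow> cm Z (e k)) \<Longrightarrow> cm Z (E b c)"
proof -
  assume a: "b < c" "\<And>k. b \<le> k \<Longrightarrow> k < c \<Longrightarrow> cm Z (e k)"
  have "cm Z (E b (b + (c - b - 1) + 1))" using a by (intro cm_E_aux) auto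
  thus ?thesis using a(1) by simp
qed
lemma cm_F: "b < c \<Longrightarrow> (\<And>k. b \<le> k \<Longrightarrow> k < c \<Longrightarrow> cm Z (f k)) \<Longrightarrow> cm Z (F b c)"
proof -
  assume a: "b < c" "\<And>k. b \<le> k \<Longrightarrow> k < c \<Longrightarrow> cm Z (f k)"
  have "cm Z (F b (b + (c - b - 1) + 1))" using a by (intro cm_F_aux) auto
  thus ?thesis using a(1) by simp
qed
lemma cm_sym: "cm X Y \<Longrightarrow> cm Y X" by (simp add: cm_def)

lemma cm_eF: "a \<in> {1..<m+n} \<Longrightarrow> 1 \<le> b \<Longrightarrow> b < c \<Longrightarrow> c \<le> m+n \<Longrightarrow> a < b \<or> c \<le> a \<Longrightarrow> cm (e a) (F b c)"
  by (rule cm_F) (auto simp: cm_def intro!: ef_comm)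
lemma cm_fE: "a \<in> {1..<m+n} \<Longrightarrow> 1 \<le> b \<Longrightarrow> b < c \<Longrightarrow> c \<le> m+n \<Longrightarrow> a < b \<or> c \<le> a \<Longrightarrow> cm (f a) (E b c)"
  by (rule cm_E) (auto simp: cm_def intro!: ef_comm[symmetric])
lemma cm_eE: "a \<in> {1..<m+n} \<Longrightarrow> 1 \<le> b \<Longrightarrow> b < c \<Longrightarrow> c \<le> m+n \<Longrightarrow> a + 1 < b \<or> c < a \<Longrightarrow> cm (e a) (E b c)"
  by (rule cm_E) (auto simp: cm_def intro!: far[THEN conjunct1])
lemma cm_fF: "a \<in> {1..<m+n} \<Longrightarrow> 1 \<le> b \<Longrightarrow> b < c \<Longrightarrow> c \<le> m+n \<Longrightarrow> a + 1 < b \<or> c < a \<Longrightarrow> cm (f a) (F b c)"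
  by (rule cm_F) (auto simp: cm_def intro!: far[THEN conjunct2])

end


context UQ begin

abbreviation "NN \<equiv> m + n"

lemma sbr_lE: "cm (e a) X \<Longrightarrow> sbr p q (e a * A - smul c (A * e a)) X = e a * sbr p q A X - smul c (sbr p q A X * e a)"
proof -
  assume h: "cm (e a) X"
  have 1: "X * e a = e a * X" using h by (simp add: cm_def)
  have 2: "X * (e a * Y) = e a * (X * Y)" for Y using 1 by (metis mult.assoc)
  show ?thesis by (cases "p \<and> q") (simp_all add: sbr_def algebra_simps smul_lin 1 2)
qed

definition T1 where "T1 i s j t \<longleftrightarrow> sbr (oddpair m i j) (oddpair m s t) (E i j) (F s t)
   = smul (inverse (qi m j) - qi m j) (K s * Ki j * F j t * E i s)"

lemma e_K_comm: "a \<in> {1..<NN} \<Longrightarrow> s \<in> {1..NN} \<Longrightarrow> s \<noteq> a \<Longrightarrow> s \<noteq> Suc a \<Longrightarrow> K s * e a = e a * K s"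
  using wt_e[of s a] by (simp add: wt_def delta_def)
lemma e_Ki_comm: "a \<in> {1..<NN} \<Longrightarrow> s \<in> {1..NN} \<Longrightarrow> s \<noteq> a \<Longrightarrow> s \<noteq> Suc a \<Longrightarrow> Ki s * e a = e a * Ki s"
  using wti_E[of s a "Suc a"] by (simp add: wti_def delta_def E_base)
lemma f_K_comm: "a \<in> {1..<NN} \<Longrightarrow> s \<in> {1..NN} \<Longrightarrow> s \<noteq> a \<Longrightarrow> s \<noteq> Suc a \<Longrightarrow> K s * f a = f a * K s"
  using wt_f[of s a] by (simp add: wt_def delta_def)
lemma f_Ki_comm: "a \<in> {1..<NN} \<Longrightarrow> s \<in> {1..NN} \<Longrightarrow> s \<noteq> a \<Longrightarrow> s \<noteq> Suc a \<Longrightarrow> Ki s * f a = f a * Ki s"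
  using wti_F[of s a "Suc a"] by (simp add: wti_def delta_def F_base)

lemma stepA: "1 \<le> i \<Longrightarrow> Suc i < s \<Longrightarrow> s < j \<Longrightarrow> j < t \<Longrightarrow> t \<le> NN \<Longrightarrow> T1 (Suc i) s j t \<Longrightarrow> T1 i s j t"
proof -
  assume a: "1 \<le> i" "Suc i < s" "s < j" "j < t" "t \<le> NN" and h: "T1 (Suc i) s j t"
  let ?A = "E (Suc i) j" and ?X = "F s t" and ?c = "inverse (qi m (Suc i))" and ?l = "inverse (qi m j) - qi m j"
  have par: "oddpair m i j \<and> oddpair m s t \<longleftrightarrow> oddpair m (Suc i) j \<and> oddpair m s t"
    using a by (auto simp: oddpair_def)
  have cX: "cm (e i) ?X" using a by (intro cm_eF) auto
  have h': "sbr (oddpair m (Suc i) j) (oddpair m s t) ?A ?X = smul ?l (K s * (Ki j * (F j t * E (Suc i) s)))"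
    using h by (simp add: T1_def mult.assoc)
  have c1: "e i * K s = K s * e i" using a by (intro e_K_comm[symmetric]) auto
  have c2: "e i * Ki j = Ki j * e i" using a by (intro e_Ki_comm[symmetric]) auto
  have c3: "e i * F j t = F j t * e i" using cm_eF[of i j t] a by (simp add: cm_def)
  have "sbr (oddpair m i j) (oddpair m s t) (E i j) ?X = sbr (oddpair m (Suc i) j) (oddpair m s t) (E i j) ?X"
    using par by (simp add: sbr_def)
  also have "\<dots> = e i * sbr (oddpair m (Suc i) j) (oddpair m s t) ?A ?X - smul ?c (sbr (oddpair m (Suc i) j) (oddpair m s t) ?A ?X * e i)"
    using E_rec[of i j] a sbr_lE[OF cX] by simp
  also have "\<dots> = smul ?l (K s * (Ki j * (F j t * (e i * E (Suc i) s - smul ?c (E (Suc i) s * e i)))))"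
    unfolding h' by (simp add: smul_lin algebra_simps flip: mult.assoc[of "e i"] add: c1 c2 c3)
  also have "\<dots> = smul ?l (K s * Ki j * F j t * E i s)"
    using E_rec[of i s] a by (simp add: mult.assoc)
  finally show ?thesis unfolding T1_def .
qed


definition Yp where "Yp s j t \<longleftrightarrow> sbr (oddpair m s j) (oddpair m s t) (E s j) (F s t)
   = smul (if s \<le> m \<and> m < j then 1 else -1) (K s * Ki j * F j t)"

lemma e_K_next: "a \<in> {1..<NN} \<Longrightarrow> e a * K (Suc a) = smul (qi m (Suc a)) (K (Suc a) * e a)"
proof -
  assume a: "a \<in> {1..<NN}"
  have "K (Suc a) * e a = smul (inverse (qi m (Suc a))) (e a * K (Suc a))"
    using wt_e[of "Suc a" a] a by (simp add: wt_def delta_def power_int_minus)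
  thus ?thesis by (simp add: qi_nz)
qed

lemma stepB: "1 \<le> i \<Longrightarrow> Suc i < j \<Longrightarrow> j < t \<Longrightarrow> t \<le> NN \<Longrightarrow> Yp (Suc i) j t \<Longrightarrow> T1 i (Suc i) j t"
proof -
  assume a: "1 \<le> i" "Suc i < j" "j < t" "t \<le> NN" and h: "Yp (Suc i) j t"
  let ?s = "Suc i"
  let ?A = "E ?s j" and ?X = "F ?s t" and ?c = "inverse (qi m ?s)" and ?l = "inverse (qi m j) - qi m j"
  let ?mu = "(if ?s \<le> m \<and> m < j then 1 else -1) :: cq"
  have par: "oddpair m i j \<and> oddpair m ?s t \<longleftrightarrow> oddpair m ?s j \<and> oddpair m ?s t"
    using a by (auto simp: oddpair_def)
  have cX: "cm (e i) ?X" using a by (intro cm_eF) auto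
  have h': "sbr (oddpair m ?s j) (oddpair m ?s t) ?A ?X = smul ?mu (K ?s * (Ki j * F j t))"
    using h by (simp add: Yp_def mult.assoc)
  have c1: "e i * K ?s = smul (qi m ?s) (K ?s * e i)" using a by (intro e_K_next) auto
  have c2: "e i * Ki j = Ki j * e i" using a by (intro e_Ki_comm[symmetric]) auto
  have c3: "e i * F j t = F j t * e i" using cm_eF[of i j t] a by (simp add: cm_def)
  have sc: "?mu * (qi m ?s - inverse (qi m ?s)) = ?l"
    using a by (auto simp: qi_def)
  have "sbr (oddpair m i j) (oddpair m ?s t) (E i j) ?X = sbr (oddpair m ?s j) (oddpair m ?s t) (E i j) ?X"
    using par by (simp add: sbr_def)
  also have "\<dots> = e i * sbr (oddpair m ?s j) (oddpair m ?s t) ?A ?X - smul ?c (sbr (oddpair m ?s j) (oddpair m ?s t) ?A ?X * e i)"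
    using E_rec[of i j] a sbr_lE[OF cX] by simp
  also have "\<dots> = smul (?mu * qi m ?s) (K ?s * (Ki j * (F j t * e i))) - smul (?c * ?mu) (K ?s * (Ki j * (F j t * e i)))"
    unfolding h' by (simp add: smul_lin flip: mult.assoc[of "e i"] add: c1 c2 c3 mult.assoc)
  also have "\<dots> = smul (?mu * (qi m ?s - inverse (qi m ?s))) (K ?s * (Ki j * (F j t * e i)))"
    by (simp add: smul_diff2[symmetric] algebra_simps)
  also have "\<dots> = smul ?l (K ?s * Ki j * F j t * E i ?s)"
    unfolding sc by (simp add: E_base mult.assoc)
  finally show ?thesis unfolding T1_def .
qed

end


context UQ begin

definition sg :: "bool \<Rightarrow> 'a" where "sg b = (if b then -1 else 1)"

lemma sbr_sg: "sbr p q X Y = X * Y - sg (p \<and> q) * (Y * X)" by (simp add: sbr_def sg_def)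

lemma Sexp: "X * (- smul r (x * G) + G * x) - sg (b1 \<noteq> b2) * ((- smul r (x*G) + G*x) * X)
   = - smul r ((X*x - sg b1 * (x*X)) * G + sg b1 * (x * (X*G - sg b2 * (G*X))))
     + (X*G - sg b2 * (G*X)) * x + sg b2 * (G * (X*x - sg b1*(x*X)))"
  apply (cases b1; cases b2)
  apply (simp_all only: sg_def if_True if_False simp_thms)
  apply (simp_all add: distrib_left distrib_right left_diff_distrib right_diff_distrib mult.assoc smul_lin)
  done

lemma Zexp: "A * y = y * A \<Longrightarrow> (x*A - smul c (A*x))*y - sg b*(y*(x*A - smul c (A*x)))
   = (x*y - sg b*(y*x))*A - smul c (A*(x*y - sg b*(y*x)))"
proof -
  assume h: "A * y = y * A"
  have h2: "A * (y * Z) = y * (A * Z)" for Z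
  proof -
    have "A * (y * Z) = (A * y) * Z" by (simp only: mult.assoc)
    also have "\<dots> = y * (A * Z)" by (simp only: h mult.assoc)
    finally show ?thesis .
  qed
  show ?thesis
    apply (cases b)
    apply (simp_all only: sg_def if_True if_False simp_thms)
    apply (simp_all add: distrib_left distrib_right left_diff_distrib right_diff_distrib mult.assoc smul_lin h h2)
    done
qed

lemma ass: "(X::'a) * Y = W \<Longrightarrow> X * (Y * Z) = W * Z"
proof -
  assume h: "X * Y = W"
  have "X * (Y * Z) = (X * Y) * Z" by (rule mult.assoc[symmetric])
  thus ?thesis by (simp only: h)
qed

lemma H_def': "s \<in> {1..<NN} \<Longrightarrow> e s * f s - sg (s = m) * (f s * e s)
   = smul (inverse (qi m s - inverse (qi m s))) (K s * Ki (Suc s) - Ki s * K (Suc s))"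
  using ef[of s s] by (simp add: sbr_sg smul_def)

end



lemma G1: "(y::cq) \<noteq> 0 \<Longrightarrow> y * y \<noteq> 1 \<Longrightarrow> inverse (y - inverse y) - y * (y * inverse (y - inverse y)) = - y"
proof -
  assume h: "y \<noteq> 0" "y * y \<noteq> 1"
  define k where "k = y * y - 1"
  have k: "k \<noteq> 0" using h by (simp add: k_def)
  have "y - inverse y = k / y" using h by (simp add: field_simps k_def)
  hence d: "inverse (y - inverse y) = y / k" by simp
  have e1: "y / k - y * (y * (y / k)) = (y - y * y * y) / k" using k by (simp add: field_simps)
  have e2: "y - y * y * y = - y * k" by (simp add: k_def algebra_simps)
  have "y / k - y * (y * (y / k)) = - y" unfolding e1 e2 using k by simp
  thus ?thesis unfolding d .
qed
lemma G2: "(y::cq) \<noteq> 0 \<Longrightarrow> y * y \<noteq> 1 \<Longrightarrow> inverse (y - inverse y) - inverse y * (inverse y * inverse (y - inverse y)) = inverse y"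
proof -
  assume h: "y \<noteq> 0" "y * y \<noteq> 1"
  define k where "k = y * y - 1"
  have k: "k \<noteq> 0" using h by (simp add: k_def)
  have "y - inverse y = k / y" using h by (simp add: field_simps k_def)
  hence d: "inverse (y - inverse y) = y / k" by simp
  have "y / k - inverse y * (inverse y * (y / k)) = (y * y - 1) / (y * k)" using h k by (simp add: field_simps)
  also have "\<dots> = inverse y" using h k by (simp add: k_def field_simps)
  finally show ?thesis unfolding d .
qed
lemma qq_inv_sq: "inverse qq * inverse qq \<noteq> 1"
  using qq_sq qq_nz by (metis inverse_1 inverse_mult_distrib inverse_inverse_eq)
context UQ begin

lemma sg_comm: "sg b * X = X * sg b" by (simp add: sg_def)
lemma sg_comm2: "X * (sg b * Y) = sg b * (X * Y)" by (cases b) (simp_all add: sg_def)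
lemma smul_sg: "sg b * smul c X = smul c (sg b * X)" by simp

lemma stepY_gt: "1 \<le> s \<Longrightarrow> Suc s < j \<Longrightarrow> j < t \<Longrightarrow> t \<le> NN \<Longrightarrow> T1 s (Suc s) j t \<Longrightarrow> Yp (Suc s) j t \<Longrightarrow> Yp s j t"
proof -
  assume a: "1 \<le> s" "Suc s < j" "j < t" "t \<le> NN" and hT: "T1 s (Suc s) j t" and hY: "Yp (Suc s) j t"
  define s1 where "s1 = Suc s"
  define q1 where "q1 = qi m s1"
  define qs where "qs = qi m s"
  define d where "d = inverse (qs - inverse qs)"
  define l where "l = inverse (qi m j) - qi m j"
  define mu1 :: cq where "mu1 = (if s1 \<le> m \<and> m < j then 1 else -1)"
  define mu :: cq where "mu = (if s \<le> m \<and> m < j then 1 else -1)"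
  define A where "A = E s1 j"
  define G where "G = F s1 t"
  define X where "X = E s j"
  define b1 where "b1 = (s = m)"
  define b2 where "b2 = (s1 \<le> m \<and> m < j)"
  define R where "R = K s1 * (Ki j * F j t)"
  define dd where "dd = d * (q1 - inverse q1)"
  define Hs where "Hs = e s * f s - sg b1 * (f s * e s)"
  define Z where "Z = X * f s - sg b1 * (f s * X)"
  define T where "T = X * G - sg b2 * (G * X)"
  have q1nz: "q1 \<noteq> 0" by (simp add: q1_def qi_nz)
  have sN: "s \<in> {1..<NN}" "s \<in> {1..NN}" "s1 \<in> {1..NN}" "j \<in> {1..NN}" using a by (auto simp: s1_def)
  have Hs: "Hs = smul d (K s * Ki s1 - Ki s * K s1)"
    unfolding Hs_def d_def qs_def b1_def s1_def using H_def'[OF sN(1)] by simp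
  have Xr: "X = e s * A - smul (inverse q1) (A * e s)"
    unfolding X_def A_def q1_def s1_def using E_rec[of s j] a by simp
  have Fr: "F s t = - smul q1 (f s * G) + G * f s"
    unfolding G_def q1_def s1_def using F_rec[of s t] a by simp
  have cAf: "A * f s = f s * A" using cm_fE[of s s1 j] a unfolding A_def s1_def by (simp add: cm_def)
  have ZZ0: "Z = Hs * A - smul (inverse q1) (A * Hs)"
    unfolding Z_def Hs_def Xr using Zexp[OF cAf] .
  have wA1: "K s * A = A * K s" using wt_E[of s s1 j] a unfolding A_def s1_def by (simp add: wt_def delta_def)
  have wA2: "Ki s1 * A = smul (inverse q1) (A * Ki s1)"
    using wti_E[of s1 s1 j] a unfolding A_def s1_def q1_def by (simp add: wti_def delta_def power_int_minus)
  have wA3: "Ki s * A = A * Ki s" using wti_E[of s s1 j] a unfolding A_def s1_def by (simp add: wti_def delta_def)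
  have wA4: "K s1 * A = smul q1 (A * K s1)"
    using wt_E[of s1 s1 j] a unfolding A_def s1_def q1_def by (simp add: wt_def delta_def)
  have ZZ: "Z = - smul dd (A * (Ki s * K s1))"
  proof -
    have "Z = smul (d * inverse q1) (A * (K s * Ki s1)) - smul (d * q1) (A * (Ki s * K s1))
              - (smul (inverse q1 * d) (A * (K s * Ki s1)) - smul (inverse q1 * d) (A * (Ki s * K s1)))"
      unfolding ZZ0 Hs by (simp add: algebra_simps smul_lin wA1 wA2 wA3 wA4 ass[OF wA1] ass[OF wA2] ass[OF wA3] ass[OF wA4])
    thus ?thesis unfolding dd_def by (simp add: algebra_simps smul_lin)
  qed
  have TT: "T = smul l (K s1 * (Ki j * (F j t * e s)))"
  proof -
    have p: "oddpair m s j \<and> oddpair m (Suc s) t \<longleftrightarrow> b2" using a unfolding b2_def s1_def oddpair_def by auto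
    show ?thesis using hT unfolding T1_def T_def sbr_sg X_def G_def s1_def p
      by (simp add: E_base mult.assoc l_def)
  qed
  have YY: "A * G - sg b2 * (G * A) = smul mu1 (K s1 * (Ki j * F j t))"
  proof -
    have p: "oddpair m (Suc s) j \<and> oddpair m (Suc s) t \<longleftrightarrow> b2" using a unfolding b2_def s1_def oddpair_def by auto
    show ?thesis using hY unfolding Yp_def sbr_sg A_def G_def mu1_def s1_def p
      by (simp add: mult.assoc)
  qed
  have wG1: "Ki s * G = G * Ki s" using wti_F[of s s1 t] a unfolding G_def s1_def by (simp add: wti_def delta_def)
  have wG2: "K s1 * G = smul (inverse q1) (G * K s1)"
    using wt_F[of s1 s1 t] a unfolding G_def s1_def q1_def by (simp add: wt_def delta_def power_int_minus)
  have sc1: "q1 * (dd * inverse q1) = dd" using q1nz by simp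
  have PA: "- smul q1 (Z * G) + sg b2 * (G * Z) = smul (dd * mu1) (K s1 * (Ki j * F j t) * (Ki s * K s1))"
  proof -
    have "- smul q1 (Z * G) + sg b2 * (G * Z) = smul (q1 * (dd * inverse q1)) (A * (G * (Ki s * K s1))) - smul dd (sg b2 * (G * (A * (Ki s * K s1))))"
      unfolding ZZ by (simp add: smul_lin algebra_simps wG1 wG2 ass[OF wG1] ass[OF wG2] sg_comm2)
    also have "\<dots> = smul dd ((A * G - sg b2 * (G * A)) * (Ki s * K s1))"
      unfolding sc1 by (simp add: smul_lin algebra_simps)
    also have "\<dots> = smul (dd * mu1) (K s1 * (Ki j * F j t) * (Ki s * K s1))"
      unfolding YY by simp
    finally show ?thesis .
  qed
  have wf1: "f s * K s1 = smul (inverse q1) (K s1 * f s)"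
  proof -
    have "K s1 * f s = smul q1 (f s * K s1)"
      using wt_f[of s1 s] sN unfolding s1_def q1_def by (simp add: wt_def delta_def)
    thus ?thesis using q1nz by simp
  qed
  have wf2: "f s * Ki j = Ki j * f s" using f_Ki_comm[of s j] sN a by (simp add: s1_def)
  have wf3: "f s * F j t = F j t * f s" using cm_fF[of s j t] sN a by (simp add: cm_def)
  have sc2: "q1 * (l * inverse q1) = l" using q1nz by simp
  have PB: "- smul q1 (sg b1 * (f s * T)) + T * f s = smul (l * d) (K s1 * (Ki j * F j t) * (K s * Ki s1 - Ki s * K s1))"
  proof -
    have "- smul q1 (sg b1 * (f s * T)) + T * f s = smul (q1 * (l * inverse q1)) (- (sg b1 * (K s1 * (Ki j * (F j t * (f s * e s)))))) + smul l (K s1 * (Ki j * (F j t * (e s * f s))))"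
      unfolding TT by (simp add: smul_lin algebra_simps wf1 wf2 wf3 ass[OF wf1] ass[OF wf2] ass[OF wf3] sg_comm2)
    also have "\<dots> = smul l (K s1 * (Ki j * F j t) * Hs)"
      unfolding sc2 Hs_def by (simp add: smul_lin algebra_simps sg_comm2)
    also have "\<dots> = smul (l * d) (K s1 * (Ki j * F j t) * (K s * Ki s1 - Ki s * K s1))"
      unfolding Hs by simp
    finally show ?thesis .
  qed
  have par: "oddpair m s j \<and> oddpair m s t \<longleftrightarrow> (b1 \<noteq> b2)"
    using a unfolding b1_def b2_def s1_def oddpair_def by auto
  have sc3: "dd * mu1 = l * d" and sc4: "l * d = mu"
    unfolding dd_def mu1_def l_def d_def mu_def q1_def qs_def s1_def qi_def
    using a qq_nz qq_inv_nz by (auto simp: field_simps)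
  have fin: "K s1 * (Ki j * F j t) * (K s * Ki s1) = K s * Ki j * F j t"
  proof -
    have c1: "F j t * K s = K s * F j t" using wt_F[of s j t] a by (simp add: wt_def delta_def)
    have c2: "F j t * Ki s1 = Ki s1 * F j t" using wti_F[of s1 j t] a by (simp add: wti_def delta_def s1_def)
    have c3: "Ki j * K s = K s * Ki j" using KiK'[of j s] sN by simp
    have c4: "Ki j * Ki s1 = Ki s1 * Ki j" using KiKi[of j s1] sN by simp
    have c5: "K s1 * K s = K s * K s1" using KK[of s1 s] sN by simp
    have "K s1 * (Ki j * F j t) * (K s * Ki s1) = K s1 * (Ki j * (F j t * K s * Ki s1))" by (simp add: mult.assoc)
    also have "\<dots> = K s1 * (Ki j * K s * (F j t * Ki s1))" by (simp add: c1 mult.assoc)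
    also have "\<dots> = K s1 * K s * (Ki j * Ki s1 * F j t)" by (simp add: c2 c3 mult.assoc)
    also have "\<dots> = K s * (K s1 * Ki s1) * (Ki j * F j t)" by (simp add: c4 c5 mult.assoc)
    also have "\<dots> = K s * Ki j * F j t" using sN by (simp add: KKi mult.assoc)
    finally show ?thesis .
  qed
  have "sbr (oddpair m s j) (oddpair m s t) (E s j) (F s t)
     = X * F s t - sg (b1 \<noteq> b2) * (F s t * X)" unfolding sbr_sg par X_def ..
  also have "\<dots> = - smul q1 (Z * G + sg b1 * (f s * T)) + T * f s + sg b2 * (G * Z)"
    unfolding Fr Sexp Z_def T_def ..
  also have "\<dots> = (- smul q1 (Z * G) + sg b2 * (G * Z)) + (- smul q1 (sg b1 * (f s * T)) + T * f s)"
    by (simp add: smul_lin algebra_simps)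
  also have "\<dots> = smul (l * d) (K s1 * (Ki j * F j t) * (K s * Ki s1)) + smul (dd * mu1 - l * d) (K s1 * (Ki j * F j t) * (Ki s * K s1))"
    unfolding PA PB by (simp add: smul_lin algebra_simps)
  also have "\<dots> = smul mu (K s * Ki j * F j t)"
    unfolding sc3 sc4 fin by simp
  finally show ?thesis unfolding Yp_def mu_def .
qed


lemma stepY_eq: "1 \<le> s \<Longrightarrow> Suc s < t \<Longrightarrow> t \<le> NN \<Longrightarrow> Yp s (Suc s) t"
proof -
  assume a: "1 \<le> s" "Suc s < t" "t \<le> NN"
  define s1 where "s1 = Suc s"
  define q1 where "q1 = qi m s1"
  define qs where "qs = qi m s"
  define d where "d = inverse (qs - inverse qs)"
  define mu :: cq where "mu = (if s \<le> m \<and> m < s1 then 1 else -1)"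
  define G where "G = F s1 t"
  define b1 where "b1 = (s = m)"
  define Hs where "Hs = e s * f s - sg b1 * (f s * e s)"
  have q1nz: "q1 \<noteq> 0" by (simp add: q1_def qi_nz)
  have sN: "s \<in> {1..<NN}" "s \<in> {1..NN}" "s1 \<in> {1..NN}" using a by (auto simp: s1_def)
  have Hs: "Hs = smul d (K s * Ki s1 - Ki s * K s1)"
    unfolding Hs_def d_def qs_def b1_def s1_def using H_def'[OF sN(1)] by simp
  have Fr: "F s t = - smul q1 (f s * G) + G * f s"
    unfolding G_def q1_def s1_def using F_rec[of s t] a by simp
  have T0: "e s * G - sg False * (G * e s) = 0"
    using cm_eF[of s s1 t] a sN unfolding G_def s1_def by (simp add: cm_def sg_def)
  have wG1: "Ki s * G = G * Ki s" using wti_F[of s s1 t] a unfolding G_def s1_def by (simp add: wti_def delta_def)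
  have wG2: "K s1 * G = smul (inverse q1) (G * K s1)"
    using wt_F[of s1 s1 t] a unfolding G_def s1_def q1_def by (simp add: wt_def delta_def power_int_minus)
  have wG3: "K s * G = G * K s" using wt_F[of s s1 t] a unfolding G_def s1_def by (simp add: wt_def delta_def)
  have wG4: "Ki s1 * G = smul q1 (G * Ki s1)"
    using wti_F[of s1 s1 t] a unfolding G_def s1_def q1_def by (simp add: wti_def delta_def)
  have par: "oddpair m s (Suc s) \<and> oddpair m s t \<longleftrightarrow> (b1 \<noteq> False)"
    using a unfolding b1_def s1_def oddpair_def by auto
  have sc: "q1 * (d * inverse q1) = d" using q1nz by simp
  have sc2: "d - q1 * (q1 * d) = mu * q1"
  proof (cases "s < m")
    case True
    thus ?thesis unfolding mu_def d_def q1_def qs_def s1_def qi_def using G1[OF qq_nz qq_sq] by simp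
  next
    case False
    show ?thesis
    proof (cases "s = m")
      case True
      thus ?thesis unfolding mu_def d_def q1_def qs_def s1_def qi_def using G2[OF qq_nz qq_sq] by simp
    next
      case False
      hence "m < s" using \<open>\<not> s < m\<close> by simp
      thus ?thesis unfolding mu_def d_def q1_def qs_def s1_def qi_def
        using G1[of "inverse qq"] qq_nz qq_inv_sq by simp
    qed
  qed
  have "sbr (oddpair m s s1) (oddpair m s t) (E s s1) (F s t)
     = e s * F s t - sg (b1 \<noteq> False) * (F s t * e s)" unfolding sbr_sg s1_def E_base par ..
  also have "\<dots> = - smul q1 (Hs * G + sg b1 * (f s * (e s * G - sg False * (G * e s)))) + (e s * G - sg False * (G * e s)) * f s + sg False * (G * Hs)"
    unfolding Fr Sexp Hs_def ..
  also have "\<dots> = - smul q1 (Hs * G) + G * Hs" unfolding T0 by (simp add: sg_def)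
  also have "\<dots> = smul (d - q1 * (q1 * d)) (G * (K s * Ki s1)) + smul (q1 * (d * inverse q1) - d) (G * (Ki s * K s1))"
    unfolding Hs by (simp add: smul_lin algebra_simps wG1 wG2 wG3 wG4 ass[OF wG1] ass[OF wG2] ass[OF wG3] ass[OF wG4])
  also have "\<dots> = smul mu (K s * (Ki s1 * G))"
    unfolding sc sc2 by (simp add: wG4 ass[OF wG3] mult.assoc)
  finally show ?thesis unfolding Yp_def mu_def G_def s1_def by (simp add: mult.assoc)
qed


lemma T1_from_Y_aux: "Yp s j t \<Longrightarrow> 1 \<le> i \<Longrightarrow> s = i + k + 1 \<Longrightarrow> s < j \<Longrightarrow> j < t \<Longrightarrow> t \<le> NN \<Longrightarrow> T1 i s j t"
proof (induction k arbitrary: i)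
  case 0
  hence "s = Suc i" by simp
  thus ?case using stepB[of i j t] "0.prems" by simp
next
  case (Suc k)
  have "T1 (Suc i) s j t"
    by (rule Suc.IH) (use Suc.prems in simp_all)
  thus ?case using Suc.prems by (rule_tac stepA) simp_all
qed

lemma T1_from_Y: "Yp s j t \<Longrightarrow> 1 \<le> i \<Longrightarrow> i < s \<Longrightarrow> s < j \<Longrightarrow> j < t \<Longrightarrow> t \<le> NN \<Longrightarrow> T1 i s j t"
  by (rule T1_from_Y_aux[of s j t i "s - i - 1"]) simp_all

lemma Y_all_aux: "j = s + k + 1 \<Longrightarrow> 1 \<le> s \<Longrightarrow> j < t \<Longrightarrow> t \<le> NN \<Longrightarrow> Yp s j t"
proof (induction k arbitrary: s)
  case 0
  hence "j = Suc s" by simp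
  then show ?case using stepY_eq[of s t] "0.prems" by simp
next
  case (Suc k)
  have y1: "Yp (Suc s) j t" by (rule Suc.IH) (use Suc.prems in simp_all)
  have t1: "T1 s (Suc s) j t" by (rule T1_from_Y[OF y1]) (use Suc.prems in simp_all)
  show ?case by (rule stepY_gt[OF _ _ _ _ t1 y1]) (use Suc.prems in simp_all)
qed

lemma Y_all: "1 \<le> s \<Longrightarrow> s < j \<Longrightarrow> j < t \<Longrightarrow> t \<le> NN \<Longrightarrow> Yp s j t"
  by (rule Y_all_aux[of j s "j - s - 1" t]) simp_all

lemma T1_all: "1 \<le> i \<Longrightarrow> i < s \<Longrightarrow> s < j \<Longrightarrow> j < t \<Longrightarrow> t \<le> NN \<Longrightarrow> T1 i s j t"
  by (rule T1_from_Y[OF Y_all[of s j t]]) simp_all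

end



lemma yinv_nz: "(y::cq) \<noteq> 0 \<Longrightarrow> y * y \<noteq> 1 \<Longrightarrow> y - inverse y \<noteq> 0"
proof
  assume h: "y \<noteq> 0" "y * y \<noteq> 1" "y - inverse y = 0"
  hence "y * (y - inverse y) = 0" by simp
  hence "y * y = 1" using h(1) by (simp add: algebra_simps)
  thus False using h(2) by simp
qed
lemma L1: "(y::cq) \<noteq> 0 \<Longrightarrow> (d - y * (y * d)) * inverse y * (-1) = (y - inverse y) * d"
  by (simp add: field_simps)
lemma L3: "(y::cq) \<noteq> 0 \<Longrightarrow> (d - y * (y * d)) * inverse y * 1 = (inverse y - y) * d"
  by (simp add: field_simps)
lemma L2: "(y::cq) \<noteq> 0 \<Longrightarrow> (d - inverse y * (inverse y * d)) * inverse (inverse y) * (-1) = (inverse y - y) * d"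
  by (simp add: field_simps)
lemma L4: "(y::cq) \<noteq> 0 \<Longrightarrow> y * y \<noteq> 1 \<Longrightarrow> (y - inverse y) * inverse (y - inverse y) = 1"
  using yinv_nz by simp
lemma L5: "(y::cq) \<noteq> 0 \<Longrightarrow> y * y \<noteq> 1 \<Longrightarrow> - ((inverse y - y) * inverse (y - inverse y)) = 1"
proof -
  assume h: "y \<noteq> 0" "y * y \<noteq> 1"
  have "- ((inverse y - y) * inverse (y - inverse y)) = (y - inverse y) * inverse (y - inverse y)" by (simp add: algebra_simps)
  thus ?thesis using L4[OF h] by simp
qed
lemma G3: "(y::cq) \<noteq> 0 \<Longrightarrow> y * y \<noteq> 1 \<Longrightarrow> inverse y * inverse (y - inverse y) - inverse (y - inverse y) * y = -1"
proof -
  assume h: "y \<noteq> 0" "y * y \<noteq> 1"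
  have "inverse y * inverse (y - inverse y) - inverse (y - inverse y) * y = - (inverse (y - inverse y) * (y - inverse y))"
    by (simp add: algebra_simps)
  also have "\<dots> = -1" using yinv_nz[OF h] by simp
  finally show ?thesis .
qed
lemma G4: "(y::cq) \<noteq> 0 \<Longrightarrow> y * y \<noteq> 1 \<Longrightarrow> inverse (inverse y) * inverse (y - inverse y) - inverse (y - inverse y) * inverse y = 1"
proof -
  assume h: "y \<noteq> 0" "y * y \<noteq> 1"
  have "inverse (inverse y) * inverse (y - inverse y) - inverse (y - inverse y) * inverse y = inverse (y - inverse y) * (y - inverse y)"
    by (simp add: algebra_simps)
  also have "\<dots> = 1" using yinv_nz[OF h] by simp
  finally show ?thesis .
qed
context UQ begin

lemma sbr_rF: "cm (f a) X \<Longrightarrow> sbr p q X (- smul r (f a * G) + G * f a) = - smul r (f a * sbr p q X G) + sbr p q X G * f a"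
proof -
  assume h: "cm (f a) X"
  have 1: "X * f a = f a * X" using h by (simp add: cm_def)
  have 2: "X * (f a * Y) = f a * (X * Y)" for Y
  proof -
    have "X * (f a * Y) = (X * f a) * Y" by (simp only: mult.assoc)
    also have "\<dots> = f a * (X * Y)" by (simp only: 1 mult.assoc)
    finally show ?thesis .
  qed
  show ?thesis unfolding sbr_sg
    apply (cases "p \<and> q")
    apply (simp_all only: sg_def if_True if_False simp_thms)
    apply (simp_all add: distrib_left distrib_right left_diff_distrib right_diff_distrib mult.assoc smul_lin 1 2)
    done
qed

lemma Sexp2: "(x*A - smul c (A*x))*Fv - sg (b1 \<noteq> b2)*(Fv*(x*A - smul c (A*x)))
  = x*(A*Fv - sg b2*(Fv*A)) + sg b2*((x*Fv - sg b1*(Fv*x))*A)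
    - smul c (A*(x*Fv - sg b1*(Fv*x)) + sg b1*((A*Fv - sg b2*(Fv*A))*x))"
  apply (cases b1; cases b2)
  apply (simp_all only: sg_def if_True if_False simp_thms)
  apply (simp_all add: distrib_left distrib_right left_diff_distrib right_diff_distrib mult.assoc smul_lin)
  done

lemma Zexp2: "x * B = B * x \<Longrightarrow> x*(- smul r (y*B) + B*y) - sg b*((- smul r (y*B) + B*y)*x)
   = - smul r ((x*y - sg b*(y*x))*B) + B*(x*y - sg b*(y*x))"
proof -
  assume h: "x * B = B * x"
  have h2: "x * (B * Z) = B * (x * Z)" for Z
  proof -
    have "x * (B * Z) = (x * B) * Z" by (simp only: mult.assoc)
    also have "\<dots> = B * (x * Z)" by (simp only: h mult.assoc)
    finally show ?thesis .
  qed
  show ?thesis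
    apply (cases b)
    apply (simp_all only: sg_def if_True if_False simp_thms)
    apply (simp_all add: distrib_left distrib_right left_diff_distrib right_diff_distrib mult.assoc smul_lin h h2)
    done
qed

definition T2 where "T2 i s j t \<longleftrightarrow> sbr (oddpair m s t) (oddpair m i j) (E s t) (F i j)
   = smul (qi m j - inverse (qi m j)) (F i s * E j t * Ki s * K j)"
definition Y2 where "Y2 s j t \<longleftrightarrow> sbr (oddpair m s t) (oddpair m s j) (E s t) (F s j)
   = smul (if s \<le> m \<and> m < j then 1 else -1) (E j t * Ki s * K j)"

lemma stepA2: "1 \<le> i \<Longrightarrow> Suc i < s \<Longrightarrow> s < j \<Longrightarrow> j < t \<Longrightarrow> t \<le> NN \<Longrightarrow> T2 (Suc i) s j t \<Longrightarrow> T2 i s j t"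
proof -
  assume a: "1 \<le> i" "Suc i < s" "s < j" "j < t" "t \<le> NN" and h: "T2 (Suc i) s j t"
  let ?G = "F (Suc i) j" and ?X = "E s t" and ?r = "qi m (Suc i)" and ?l = "qi m j - inverse (qi m j)"
  have par: "oddpair m s t \<and> oddpair m i j \<longleftrightarrow> oddpair m s t \<and> oddpair m (Suc i) j"
    using a by (auto simp: oddpair_def)
  have cX: "cm (f i) ?X" using a by (intro cm_fE) auto
  have h': "sbr (oddpair m s t) (oddpair m (Suc i) j) ?X ?G = smul ?l (F (Suc i) s * (E j t * (Ki s * K j)))"
    using h by (simp add: T2_def mult.assoc)
  have c1: "E j t * f i = f i * E j t" using cm_fE[of i j t] a by (simp add: cm_def)
  have c2: "Ki s * f i = f i * Ki s" using a by (intro f_Ki_comm) auto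
  have c3: "K j * f i = f i * K j" using a by (intro f_K_comm) auto
  have "sbr (oddpair m s t) (oddpair m i j) ?X (F i j) = sbr (oddpair m s t) (oddpair m (Suc i) j) ?X (F i j)"
    using par by (simp add: sbr_def)
  also have "\<dots> = - smul ?r (f i * sbr (oddpair m s t) (oddpair m (Suc i) j) ?X ?G) + sbr (oddpair m s t) (oddpair m (Suc i) j) ?X ?G * f i"
    using F_rec[of i j] a sbr_rF[OF cX] by simp
  also have "\<dots> = smul ?l ((- smul ?r (f i * F (Suc i) s) + F (Suc i) s * f i) * (E j t * (Ki s * K j)))"
    unfolding h' by (simp add: smul_lin algebra_simps c1 c2 c3 ass[OF c1] ass[OF c2])
  also have "\<dots> = smul ?l (F i s * E j t * Ki s * K j)"
    using F_rec[of i s] a by (simp add: mult.assoc)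
  finally show ?thesis unfolding T2_def .
qed


lemma f_Ki_next: "a \<in> {1..<NN} \<Longrightarrow> Ki (Suc a) * f a = smul (inverse (qi m (Suc a))) (f a * Ki (Suc a))"
  using wti_F[of "Suc a" a "Suc a"] by (simp add: wti_def delta_def F_base power_int_minus)

lemma stepB2: "1 \<le> i \<Longrightarrow> Suc i < j \<Longrightarrow> j < t \<Longrightarrow> t \<le> NN \<Longrightarrow> Y2 (Suc i) j t \<Longrightarrow> T2 i (Suc i) j t"
proof -
  assume a: "1 \<le> i" "Suc i < j" "j < t" "t \<le> NN" and h: "Y2 (Suc i) j t"
  define s where "s = Suc i"
  define qs where "qs = qi m s"
  define mu :: cq where "mu = (if s \<le> m \<and> m < j then 1 else -1)"
  define l where "l = qi m j - inverse (qi m j)"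
  define X where "X = E s t"
  define B where "B = F s j"
  define M where "M = E j t * (Ki s * K j)"
  have par: "oddpair m s t \<and> oddpair m i j \<longleftrightarrow> oddpair m s t \<and> oddpair m s j"
    using a by (auto simp: oddpair_def s_def)
  have cX: "cm (f i) X" using a unfolding X_def s_def by (intro cm_fE) auto
  have h': "sbr (oddpair m s t) (oddpair m s j) X B = smul mu M"
    using h unfolding Y2_def X_def B_def mu_def M_def s_def by (simp add: mult.assoc)
  have c1: "E j t * f i = f i * E j t" using cm_fE[of i j t] a by (simp add: cm_def)
  have c2: "Ki s * f i = smul (inverse qs) (f i * Ki s)" unfolding s_def qs_def using a by (intro f_Ki_next) auto
  have c3: "K j * f i = f i * K j" using a by (intro f_K_comm) auto
  have Fr: "F i j = - smul qs (f i * B) + B * f i" unfolding B_def qs_def s_def using F_rec[of i j] a by simp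
  have sc: "mu * inverse qs - qs * mu = l"
    unfolding mu_def qs_def l_def s_def qi_def using a by auto
  have "sbr (oddpair m s t) (oddpair m i j) X (F i j) = sbr (oddpair m s t) (oddpair m s j) X (F i j)"
    using par by (simp add: sbr_def)
  also have "\<dots> = - smul qs (f i * smul mu M) + smul mu M * f i"
    unfolding Fr sbr_rF[OF cX] h' ..
  also have "\<dots> = smul (mu * inverse qs) (f i * M) - smul (qs * mu) (f i * M)"
    unfolding M_def by (simp add: c1 c2 c3 ass[OF c1] ass[OF c2] mult.assoc)
  also have "\<dots> = smul l (F i s * E j t * Ki s * K j)"
    unfolding smul_diff2[symmetric] sc M_def s_def by (simp add: F_base mult.assoc)
  finally show ?thesis unfolding T2_def X_def s_def l_def .
qed


lemma stepY2_eq: "1 \<le> s \<Longrightarrow> Suc s < t \<Longrightarrow> t \<le> NN \<Longrightarrow> Y2 s (Suc s) t"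
proof -
  assume a: "1 \<le> s" "Suc s < t" "t \<le> NN"
  define s1 where "s1 = Suc s"
  define q1 where "q1 = qi m s1"
  define qs where "qs = qi m s"
  define d where "d = inverse (qs - inverse qs)"
  define mu :: cq where "mu = (if s \<le> m \<and> m < s1 then 1 else -1)"
  define A where "A = E s1 t"
  define b1 where "b1 = (s = m)"
  define Hs where "Hs = e s * f s - sg b1 * (f s * e s)"
  have sN: "s \<in> {1..<NN}" "s \<in> {1..NN}" "s1 \<in> {1..NN}" using a by (auto simp: s1_def)
  have Hs: "Hs = smul d (K s * Ki s1 - Ki s * K s1)"
    unfolding Hs_def d_def qs_def b1_def s1_def using H_def'[OF sN(1)] by simp
  have Xr: "E s t = e s * A - smul (inverse q1) (A * e s)"
    unfolding A_def q1_def s1_def using E_rec[of s t] a by simp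
  have T0: "A * f s - sg False * (f s * A) = 0"
    using cm_fE[of s s1 t] a sN unfolding A_def s1_def by (simp add: cm_def sg_def)
  have wA1: "K s * A = A * K s" using wt_E[of s s1 t] a unfolding A_def s1_def by (simp add: wt_def delta_def)
  have wA2: "Ki s1 * A = smul (inverse q1) (A * Ki s1)"
    using wti_E[of s1 s1 t] a unfolding A_def s1_def q1_def by (simp add: wti_def delta_def power_int_minus)
  have wA3: "Ki s * A = A * Ki s" using wti_E[of s s1 t] a unfolding A_def s1_def by (simp add: wti_def delta_def)
  have wA4: "K s1 * A = smul q1 (A * K s1)"
    using wt_E[of s1 s1 t] a unfolding A_def s1_def q1_def by (simp add: wt_def delta_def)
  have par: "oddpair m s t \<and> oddpair m s (Suc s) \<longleftrightarrow> (b1 \<noteq> False)"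
    using a unfolding b1_def s1_def oddpair_def by auto
  have sc: "inverse q1 * d - d * q1 = mu"
  proof (cases "s < m")
    case True
    thus ?thesis unfolding mu_def d_def q1_def qs_def s1_def qi_def using G3[OF qq_nz qq_sq] by simp
  next
    case False
    show ?thesis
    proof (cases "s = m")
      case True
      thus ?thesis unfolding mu_def d_def q1_def qs_def s1_def qi_def using G4[OF qq_nz qq_sq] by simp
    next
      case False
      hence "m < s" using \<open>\<not> s < m\<close> by simp
      thus ?thesis unfolding mu_def d_def q1_def qs_def s1_def qi_def
        using G3[of "inverse qq"] qq_nz qq_inv_sq by simp
    qed
  qed
  have "sbr (oddpair m s t) (oddpair m s (Suc s)) (E s t) (F s (Suc s))
     = E s t * f s - sg (b1 \<noteq> False) * (f s * E s t)" unfolding sbr_sg F_base par ..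
  also have "\<dots> = e s * (A * f s - sg False * (f s * A)) + sg False * (Hs * A)
       - smul (inverse q1) (A * Hs + sg b1 * ((A * f s - sg False * (f s * A)) * e s))"
    unfolding Xr Sexp2 Hs_def ..
  also have "\<dots> = Hs * A - smul (inverse q1) (A * Hs)" unfolding T0 by (simp add: sg_def)
  also have "\<dots> = smul (d * inverse q1 - inverse q1 * d) (A * (K s * Ki s1)) + smul (inverse q1 * d - d * q1) (A * (Ki s * K s1))"
    unfolding Hs by (simp add: smul_lin algebra_simps wA1 wA2 wA3 wA4 ass[OF wA1] ass[OF wA2] ass[OF wA3] ass[OF wA4])
  also have "\<dots> = smul mu (A * (Ki s * K s1))"
    unfolding sc by simp
  finally show ?thesis unfolding Y2_def mu_def A_def s1_def by (simp add: mult.assoc)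
qed


lemma stepY2_gt: "1 \<le> s \<Longrightarrow> Suc s < j \<Longrightarrow> j < t \<Longrightarrow> t \<le> NN \<Longrightarrow> T2 s (Suc s) j t \<Longrightarrow> Y2 (Suc s) j t \<Longrightarrow> Y2 s j t"
proof -
  assume a: "1 \<le> s" "Suc s < j" "j < t" "t \<le> NN" and hT: "T2 s (Suc s) j t" and hY: "Y2 (Suc s) j t"
  define s1 where "s1 = Suc s"
  define q1 where "q1 = qi m s1"
  define qs where "qs = qi m s"
  define d where "d = inverse (qs - inverse qs)"
  define l where "l = qi m j - inverse (qi m j)"
  define mu1 :: cq where "mu1 = (if s1 \<le> m \<and> m < j then 1 else -1)"
  define mu :: cq where "mu = (if s \<le> m \<and> m < j then 1 else -1)"
  define A where "A = E s1 t"
  define Bp where "Bp = F s1 j"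
  define b1 where "b1 = (s = m)"
  define b2 where "b2 = (s1 \<le> m \<and> m < j)"
  define z where "z = d - q1 * (q1 * d)"
  define Hs where "Hs = e s * f s - sg b1 * (f s * e s)"
  define Z where "Z = e s * F s j - sg b1 * (F s j * e s)"
  define T where "T = A * F s j - sg b2 * (F s j * A)"
  define X1 where "X1 = E j t * (K s * (Ki s1 * (Ki s1 * K j)))"
  define X2 where "X2 = E j t * (Ki s * K j)"
  have q1nz: "q1 \<noteq> 0" by (simp add: q1_def qi_nz)
  have sN: "s \<in> {1..<NN}" "s \<in> {1..NN}" "s1 \<in> {1..NN}" "j \<in> {1..NN}" using a by (auto simp: s1_def)
  have Hs: "Hs = smul d (K s * Ki s1 - Ki s * K s1)"
    unfolding Hs_def d_def qs_def b1_def s1_def using H_def'[OF sN(1)] by simp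
  have Xr: "E s t = e s * A - smul (inverse q1) (A * e s)"
    unfolding A_def q1_def s1_def using E_rec[of s t] a by simp
  have Fr: "F s j = - smul q1 (f s * Bp) + Bp * f s"
    unfolding Bp_def q1_def s1_def using F_rec[of s j] a by simp
  have ceB: "e s * Bp = Bp * e s" using cm_eF[of s s1 j] a unfolding Bp_def s1_def by (simp add: cm_def)
  have wB1: "Ki s * Bp = Bp * Ki s" using wti_F[of s s1 j] a unfolding Bp_def s1_def by (simp add: wti_def delta_def)
  have wB2: "K s1 * Bp = smul (inverse q1) (Bp * K s1)"
    using wt_F[of s1 s1 j] a unfolding Bp_def s1_def q1_def by (simp add: wt_def delta_def power_int_minus)
  have wB3: "K s * Bp = Bp * K s" using wt_F[of s s1 j] a unfolding Bp_def s1_def by (simp add: wt_def delta_def)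
  have wB4: "Ki s1 * Bp = smul q1 (Bp * Ki s1)"
    using wti_F[of s1 s1 j] a unfolding Bp_def s1_def q1_def by (simp add: wti_def delta_def)
  have sc1: "q1 * (d * inverse q1) = d" using q1nz by simp
  have ZZ: "Z = smul z (Bp * (K s * Ki s1))"
  proof -
    have "Z = - smul q1 (Hs * Bp) + Bp * Hs" unfolding Z_def Fr Hs_def using Zexp2[OF ceB] .
    also have "\<dots> = smul (d - q1 * (q1 * d)) (Bp * (K s * Ki s1)) + smul (q1 * (d * inverse q1) - d) (Bp * (Ki s * K s1))"
      unfolding Hs by (simp add: smul_lin algebra_simps wB1 wB2 wB3 wB4 ass[OF wB1] ass[OF wB2] ass[OF wB3] ass[OF wB4])
    also have "\<dots> = smul z (Bp * (K s * Ki s1))" unfolding sc1 z_def by simp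
    finally show ?thesis .
  qed
  have TT: "T = smul l (f s * (E j t * (Ki s1 * K j)))"
  proof -
    have p: "oddpair m (Suc s) t \<and> oddpair m s j \<longleftrightarrow> b2" using a unfolding b2_def s1_def oddpair_def by auto
    show ?thesis using hT unfolding T2_def T_def sbr_sg A_def s1_def p
      by (simp add: F_base mult.assoc l_def)
  qed
  have YY: "A * Bp - sg b2 * (Bp * A) = smul mu1 (E j t * (Ki s1 * K j))"
  proof -
    have p: "oddpair m (Suc s) t \<and> oddpair m (Suc s) j \<longleftrightarrow> b2" using a unfolding b2_def s1_def oddpair_def by auto
    show ?thesis using hY unfolding Y2_def sbr_sg A_def Bp_def mu1_def s1_def p
      by (simp add: mult.assoc)
  qed
  have wA1: "K s * A = A * K s" using wt_E[of s s1 t] a unfolding A_def s1_def by (simp add: wt_def delta_def)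
  have wA2: "Ki s1 * A = smul (inverse q1) (A * Ki s1)"
    using wti_E[of s1 s1 t] a unfolding A_def s1_def q1_def by (simp add: wti_def delta_def power_int_minus)
  have k1: "K j * K s = K s * K j" using KK[of j s] sN by simp
  have k2: "K j * Ki s1 = Ki s1 * K j" using KiK'[of s1 j] sN by simp
  have k3: "Ki s1 * K s = K s * Ki s1" using KiK'[of s1 s] sN by simp
  have PA: "sg b2 * (Z * A) - smul (inverse q1) (A * Z) = - smul (z * inverse q1 * mu1) X1"
  proof -
    have "sg b2 * (Z * A) - smul (inverse q1) (A * Z) = - smul (z * inverse q1) ((A * Bp - sg b2 * (Bp * A)) * (K s * Ki s1))"
      unfolding ZZ by (simp add: smul_lin algebra_simps wA1 wA2 ass[OF wA1] ass[OF wA2] sg_comm2)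
    also have "\<dots> = - smul (z * inverse q1 * mu1) X1"
      unfolding YY X1_def by (simp add: mult.assoc k1 k2 k3 ass[OF k1] ass[OF k2] ass[OF k3])
    finally show ?thesis .
  qed
  have e1: "K j * e s = e s * K j" using sN a by (intro e_K_comm) (auto simp: s1_def)
  have e2: "Ki s1 * e s = smul q1 (e s * Ki s1)"
    using wti_E[of s1 s s1] sN unfolding s1_def q1_def by (simp add: wti_def delta_def E_base)
  have e3: "E j t * e s = e s * E j t" using cm_eE[of s j t] a sN by (simp add: cm_def)
  have sc2: "inverse q1 * (l * q1) = l" using q1nz by simp
  have m1: "K s * E j t = E j t * K s" using wt_E[of s j t] a sN by (simp add: wt_def delta_def)
  have m2: "Ki s1 * E j t = E j t * Ki s1" using wti_E[of s1 j t] a sN by (simp add: wti_def delta_def s1_def)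
  have m3: "Ki s * E j t = E j t * Ki s" using wti_E[of s j t] a sN by (simp add: wti_def delta_def)
  have m4: "K s1 * E j t = E j t * K s1" using wt_E[of s1 j t] a sN by (simp add: wt_def delta_def s1_def)
  have PB: "e s * T - smul (inverse q1) (sg b1 * (T * e s)) = smul (l * d) X1 - smul (l * d) X2"
  proof -
    have "e s * T - smul (inverse q1) (sg b1 * (T * e s)) = smul l (e s * (f s * (E j t * (Ki s1 * K j)))) - smul (inverse q1 * (l * q1)) (sg b1 * (f s * (e s * (E j t * (Ki s1 * K j)))))"
      unfolding TT by (simp add: smul_lin algebra_simps e1 e2 e3 ass[OF e1] ass[OF e2] ass[OF e3] sg_comm2)
    also have "\<dots> = smul l (Hs * (E j t * (Ki s1 * K j)))"
      unfolding sc2 Hs_def by (simp add: smul_lin algebra_simps sg_comm2)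
    also have "\<dots> = smul (l * d) X1 - smul (l * d) X2"
      unfolding Hs X1_def X2_def using sN
      by (simp add: smul_lin algebra_simps m1 m2 m3 m4 ass[OF m1] ass[OF m2] ass[OF m3] ass[OF m4] ass[OF KKi] KKi)
    finally show ?thesis .
  qed
  have par: "oddpair m s t \<and> oddpair m s j \<longleftrightarrow> (b1 \<noteq> b2)"
    using a unfolding b1_def b2_def s1_def oddpair_def by auto
  have sc: "z * inverse q1 * mu1 = l * d \<and> - (l * d) = mu"
  proof -
    have c: "m < s \<or> s = m \<or> (s1 \<le> m \<and> m < j) \<or> j \<le> m" unfolding s1_def by auto
    have iqq: "inverse qq \<noteq> 0" using qq_nz by simp
    show ?thesis using c
    proof (elim disjE)
      assume h: "m < s"
      hence v: "qs = inverse qq" "q1 = inverse qq" "qi m j = inverse qq" "mu1 = -1" "mu = -1"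
        using a unfolding qs_def q1_def s1_def qi_def mu1_def mu_def by auto
      show ?thesis unfolding z_def l_def d_def v
        using L1[OF iqq, of "inverse (inverse qq - inverse (inverse qq))"] L4[OF iqq qq_inv_sq] by simp
    next
      assume h: "s = m"
      hence v: "qs = qq" "q1 = inverse qq" "qi m j = inverse qq" "mu1 = -1" "mu = 1"
        using a unfolding qs_def q1_def s1_def qi_def mu1_def mu_def by auto
      show ?thesis unfolding z_def l_def d_def v
        using L2[OF qq_nz, of "inverse (qq - inverse qq)"] L5[OF qq_nz qq_sq] by simp
    next
      assume h: "s1 \<le> m \<and> m < j"
      hence v: "qs = qq" "q1 = qq" "qi m j = inverse qq" "mu1 = 1" "mu = 1"
        using a unfolding qs_def q1_def s1_def qi_def mu1_def mu_def by auto
      show ?thesis unfolding z_def l_def d_def v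
        using L3[OF qq_nz, of "inverse (qq - inverse qq)"] L5[OF qq_nz qq_sq] by simp
    next
      assume h: "j \<le> m"
      hence v: "qs = qq" "q1 = qq" "qi m j = qq" "mu1 = -1" "mu = -1"
        using a unfolding qs_def q1_def s1_def qi_def mu1_def mu_def by auto
      show ?thesis unfolding z_def l_def d_def v
        using L1[OF qq_nz, of "inverse (qq - inverse qq)"] L4[OF qq_nz qq_sq] by simp
    qed
  qed
  have sc3: "z * inverse q1 * mu1 = l * d" and sc4: "- (l * d) = mu" using sc by auto
  have "sbr (oddpair m s t) (oddpair m s j) (E s t) (F s j)
     = E s t * F s j - sg (b1 \<noteq> b2) * (F s j * E s t)" unfolding sbr_sg par ..
  also have "\<dots> = e s * T + sg b2 * (Z * A) - smul (inverse q1) (A * Z + sg b1 * (T * e s))"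
    unfolding Xr Sexp2 Z_def T_def ..
  also have "\<dots> = (sg b2 * (Z * A) - smul (inverse q1) (A * Z)) + (e s * T - smul (inverse q1) (sg b1 * (T * e s)))"
    by (simp add: smul_lin algebra_simps)
  also have "\<dots> = smul (l * d - z * inverse q1 * mu1) X1 + smul (- (l * d)) X2"
    unfolding PA PB by (simp add: smul_lin algebra_simps)
  also have "\<dots> = smul mu (E j t * Ki s * K j)"
    unfolding sc3 sc4 X2_def by (simp add: mult.assoc)
  finally show ?thesis unfolding Y2_def mu_def .
qed


lemma T2_from_Y_aux: "Y2 s j t \<Longrightarrow> 1 \<le> i \<Longrightarrow> s = i + k + 1 \<Longrightarrow> s < j \<Longrightarrow> j < t \<Longrightarrow> t \<le> NN \<Longrightarrow> T2 i s j t"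
proof (induction k arbitrary: i)
  case 0
  hence "s = Suc i" by simp
  thus ?case using stepB2[of i j t] "0.prems" by simp
next
  case (Suc k)
  have "T2 (Suc i) s j t"
    by (rule Suc.IH) (use Suc.prems in simp_all)
  thus ?case using Suc.prems by (rule_tac stepA2) simp_all
qed

lemma T2_from_Y: "Y2 s j t \<Longrightarrow> 1 \<le> i \<Longrightarrow> i < s \<Longrightarrow> s < j \<Longrightarrow> j < t \<Longrightarrow> t \<le> NN \<Longrightarrow> T2 i s j t"
  by (rule T2_from_Y_aux[of s j t i "s - i - 1"]) simp_all

lemma Y2_all_aux: "j = s + k + 1 \<Longrightarrow> 1 \<le> s \<Longrightarrow> j < t \<Longrightarrow> t \<le> NN \<Longrightarrow> Y2 s j t"
proof (induction k arbitrary: s)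
  case 0
  hence "j = Suc s" by simp
  then show ?case using stepY2_eq[of s t] "0.prems" by simp
next
  case (Suc k)
  have y1: "Y2 (Suc s) j t" by (rule Suc.IH) (use Suc.prems in simp_all)
  have t1: "T2 s (Suc s) j t" by (rule T2_from_Y[OF y1]) (use Suc.prems in simp_all)
  show ?case by (rule stepY2_gt[OF _ _ _ _ t1 y1]) (use Suc.prems in simp_all)
qed

lemma T2_all: "1 \<le> i \<Longrightarrow> i < s \<Longrightarrow> s < j \<Longrightarrow> j < t \<Longrightarrow> t \<le> NN \<Longrightarrow> T2 i s j t"
  by (rule T2_from_Y[OF Y2_all_aux[of j s "j - s - 1" t]]) simp_all

end

theorem lemma4p3:
  fixes emb :: "cq \<Rightarrow> 'a::ring_1"
    and K Ki e f :: "nat \<Rightarrow> 'a"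
    and m n i s j t :: nat
  assumes "1 \<le> m" and "1 \<le> n"
    and "uq_alg m n emb K Ki e f"
    and "1 \<le> i" and "i < s" and "s < j" and "j < t" and "t \<le> m + n"
  shows "(sbr (oddpair m i j) (oddpair m s t) (Eel m emb e i j) (Fel m emb f s t)
           = emb (inverse (qi m j) - qi m j) * K s * Ki j * Fel m emb f j t * Eel m emb e i s)
       \<and> (sbr (oddpair m s t) (oddpair m i j) (Eel m emb e s t) (Fel m emb f i j)
           = emb (qi m j - inverse (qi m j)) * Fel m emb f i s * Eel m emb e j t * Ki s * K j)"
proof -
  interpret U: UQ m n emb K Ki e f by unfold_locales (rule assms(3))
  have 1: "U.T1 i s j t" using assms by (intro U.T1_all) auto
  have 2: "U.T2 i s j t" using assms by (intro U.T2_all) auto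
  show ?thesis using 1 2 unfolding U.T1_def U.T2_def U.smul_def by (simp add: mult.assoc)
qed


end
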